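(* Let $V(t),t\in\mathbb{Z}^d$, be a non-negative rf and $\|\cdot\|$ a norm on $\mathbb{R}^d$. Then $P(\lim_{\|t\|\to\infty}V(t)=0)=1$ if and only if there exists a non-decreasing sequence of integers $r_n\to\infty$ such that for every $\delta>0$, $$\lim_{m\to\infty}\limsup_{n\to\infty}P\Big(\max_{m\le\|t\|\le r_n}V(t)>\delta\Big)=0.$$ *)

theory Defs
  imports "HOL-Probability.Probability"
begin

text \<open>A norm on R^d (d = CARD('d)), given as an arbitrary function satisfying the norm axioms.\<close>
definition is_norm_on :: "(real ^ 'd \<Rightarrow> real) \<Rightarrow> bool" where
  "is_norm_on N \<longleftrightarrow>
     (\<forall>x. N x = 0 \<longleftrightarrow> x = 0) \<and>
     (\<forall>x y. N (x + y) \<le> N x + N y) \<and>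
     (\<forall>c x. N (c *\<^sub>R x) = \<bar>c\<bar> * N x)"

definition lat :: "int ^ 'd \<Rightarrow> real ^ 'd" where
  "lat t = (\<chi> i. real_of_int (t $ i))"

end

theory Submission
  imports Defs
begin

theorem lemmaA4:
  fixes M :: "'a measure" and V :: "int ^ 'd \<Rightarrow> 'a \<Rightarrow> real"
    and N :: "real ^ 'd \<Rightarrow> real"
  assumes "prob_space M"
    and "\<And>t. V t \<in> borel_measurable M"
    and "\<And>t \<omega>. \<omega> \<in> space M \<Longrightarrow> V t \<omega> \<ge> 0"
    and "is_norm_on N"
  shows "measure M {\<omega> \<in> space M. \<forall>\<epsilon>>0. \<exists>R. \<forall>t. N (lat t) > R \<longrightarrow> \<bar>V t \<omega>\<bar> < \<epsilon>} = 1
    \<longleftrightarrow>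
    (\<exists>r :: nat \<Rightarrow> int. mono r \<and> filterlim r at_top sequentially \<and>
      (\<forall>\<delta>>0. (\<lambda>m::nat. limsup (\<lambda>n. ereal (measure M
          {\<omega> \<in> space M. \<exists>t. real m \<le> N (lat t) \<and> N (lat t) \<le> real_of_int (r n) \<and> V t \<omega> > \<delta>})))
        \<longlonglongrightarrow> 0))"
proof -
  interpret P: prob_space M by fact
  note Vm = assms(2)
  define A where "A = {\<omega> \<in> space M. \<forall>\<epsilon>>0. \<exists>R. \<forall>t. N (lat t) > R \<longrightarrow> \<bar>V t \<omega>\<bar> < \<epsilon>}"
  define C where "C = (\<lambda>(\<delta>::real) (m::nat). {\<omega> \<in> space M. \<exists>t. real m \<le> N (lat t) \<and> V t \<omega> > \<delta>})"
  have single: "{\<omega> \<in> space M. \<delta> < V t \<omega>} \<in> sets M" for t \<delta>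
    using Vm[of t] by measurable
  have meas: "{\<omega> \<in> space M. \<exists>t. Q t \<and> \<delta> < V t \<omega>} \<in> sets M" for Q \<delta>
  proof -
    have "{\<omega> \<in> space M. \<exists>t. Q t \<and> \<delta> < V t \<omega>} = (\<Union>t\<in>{t. Q t}. {\<omega> \<in> space M. \<delta> < V t \<omega>})"
      by auto
    also have "\<dots> \<in> sets M" using single by (intro sets.countable_UN) auto
    finally show ?thesis .
  qed
  have Cm: "C \<delta> m \<in> sets M" for \<delta> m unfolding C_def by (rule meas)
  have Cdec: "decseq (C \<delta>)" for \<delta>
  proof (rule decseq_SucI)
    fix m show "C \<delta> (Suc m) \<subseteq> C \<delta> m" unfolding C_def by force
  qed
  have Clim: "(\<lambda>m. measure M (C \<delta> m)) \<longlonglongrightarrow> measure M (\<Inter>m. C \<delta> m)" for \<delta>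
    using Cm Cdec by (intro P.finite_Lim_measure_decseq) auto
  have single2: "{\<omega> \<in> space M. \<bar>V t \<omega>\<bar> < c} \<in> sets M" for t c
    using Vm[of t] by measurable
  define B where "B = (\<Inter>k::nat. \<Union>R::nat. \<Inter>t. (if N (lat t) > real R then {\<omega> \<in> space M. \<bar>V t \<omega>\<bar> < 1/(real k+1)} else space M))"
  have big_iff: "\<omega> \<in> B \<longleftrightarrow> (\<forall>k::nat. \<exists>R::nat. \<forall>t. real R < N (lat t) \<longrightarrow> \<bar>V t \<omega>\<bar> < 1/(real k+1))"
    if w: "\<omega> \<in> space M" for \<omega>
  proof
    assume "\<omega> \<in> B"
    show "\<forall>k::nat. \<exists>R::nat. \<forall>t. real R < N (lat t) \<longrightarrow> \<bar>V t \<omega>\<bar> < 1/(real k+1)"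
    proof
      fix k :: nat
      from \<open>\<omega> \<in> B\<close> obtain R :: nat where
        R: "\<omega> \<in> (\<Inter>t. (if N (lat t) > real R then {\<omega> \<in> space M. \<bar>V t \<omega>\<bar> < 1/(real k+1)} else space M))"
        unfolding B_def by blast
      have "\<forall>t. real R < N (lat t) \<longrightarrow> \<bar>V t \<omega>\<bar> < 1/(real k+1)"
      proof (intro allI impI)
        fix t assume "real R < N (lat t)"
        moreover from R have "\<omega> \<in> (if N (lat t) > real R then {\<omega> \<in> space M. \<bar>V t \<omega>\<bar> < 1/(real k+1)} else space M)"
          by blast
        ultimately show "\<bar>V t \<omega>\<bar> < 1/(real k+1)" by simp
      qed
      thus "\<exists>R::nat. \<forall>t. real R < N (lat t) \<longrightarrow> \<bar>V t \<omega>\<bar> < 1/(real k+1)" by blast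
    qed
  next
    assume h: "\<forall>k::nat. \<exists>R::nat. \<forall>t. real R < N (lat t) \<longrightarrow> \<bar>V t \<omega>\<bar> < 1/(real k+1)"
    show "\<omega> \<in> B" unfolding B_def
    proof (rule InterI, clarify)
      fix k :: nat
      obtain R :: nat where R: "\<forall>t. real R < N (lat t) \<longrightarrow> \<bar>V t \<omega>\<bar> < 1/(real k+1)" using h by blast
      have "\<omega> \<in> (\<Inter>t. (if N (lat t) > real R then {\<omega> \<in> space M. \<bar>V t \<omega>\<bar> < 1/(real k+1)} else space M))"
        using R w by auto
      thus "\<omega> \<in> (\<Union>R::nat. \<Inter>t. (if N (lat t) > real R then {\<omega> \<in> space M. \<bar>V t \<omega>\<bar> < 1/(real k+1)} else space M))"
        by blast
    qed
  qed
  have A_eq: "A = space M \<inter> B"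
  proof (intro equalityI subsetI)
    fix \<omega> assume "\<omega> \<in> A"
    hence w: "\<omega> \<in> space M" and h: "\<forall>\<epsilon>>0. \<exists>R. \<forall>t. N (lat t) > R \<longrightarrow> \<bar>V t \<omega>\<bar> < \<epsilon>" unfolding A_def by auto
    have "\<forall>k::nat. \<exists>R::nat. \<forall>t. real R < N (lat t) \<longrightarrow> \<bar>V t \<omega>\<bar> < 1/(real k+1)"
    proof
      fix k :: nat
      obtain R where R: "\<forall>t. N (lat t) > R \<longrightarrow> \<bar>V t \<omega>\<bar> < 1/(real k+1)"
        using h[rule_format, of "1/(real k+1)"] by auto
      obtain R' :: nat where "R \<le> real R'" using real_arch_simple by blast
      hence "\<forall>t. N (lat t) > real R' \<longrightarrow> \<bar>V t \<omega>\<bar> < 1/(real k+1)" using R by force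
      thus "\<exists>R::nat. \<forall>t. real R < N (lat t) \<longrightarrow> \<bar>V t \<omega>\<bar> < 1 / (real k + 1)" by blast
    qed
    thus "\<omega> \<in> space M \<inter> B" using big_iff[OF w] w by blast
  next
    fix \<omega> assume a: "\<omega> \<in> space M \<inter> B"
    hence w: "\<omega> \<in> space M" by blast
    hence h: "\<forall>k::nat. \<exists>R::nat. \<forall>t. real R < N (lat t) \<longrightarrow> \<bar>V t \<omega>\<bar> < 1 / (real k + 1)"
      using big_iff a by blast
    show "\<omega> \<in> A" unfolding A_def
    proof (simp add: w, intro allI impI)
      fix \<epsilon> :: real assume "0 < \<epsilon>"
      then obtain k where k: "inverse (real (Suc k)) < \<epsilon>" using reals_Archimedean by blast
      obtain R :: nat where "\<forall>t. real R < N (lat t) \<longrightarrow> \<bar>V t \<omega>\<bar> < 1 / (real k + 1)" using h by blast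
      moreover have "1 / (real k + 1) < \<epsilon>" using k by (simp add: field_simps)
      ultimately show "\<exists>R. \<forall>t. R < N (lat t) \<longrightarrow> \<bar>V t \<omega>\<bar> < \<epsilon>" by force
    qed
  qed
  have inner: "(\<Inter>t. (if N (lat t) > real R then {\<omega> \<in> space M. \<bar>V t \<omega>\<bar> < 1/(real k+1)} else space M)) \<in> sets M" for k R :: nat
    by (rule sets.countable_INT) (use single2 in auto)
  have mid: "(\<Union>R::nat. \<Inter>t. (if N (lat t) > real R then {\<omega> \<in> space M. \<bar>V t \<omega>\<bar> < 1/(real k+1)} else space M)) \<in> sets M" for k :: nat
    by (rule sets.countable_UN) (use inner in blast)
  have "B \<in> sets M" unfolding B_def
    by (rule sets.countable_INT) (use mid in blast)+
  hence Am: "A \<in> sets M" unfolding A_eq by auto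
  have compl: "measure M (space M - A) = 1 - measure M A" using Am by (rule P.prob_compl)
  show ?thesis
    unfolding A_def[symmetric]
  proof
    assume h1: "measure M A = 1"
    hence c0: "measure M (space M - A) = 0" using compl by simp
    have Cto0: "(\<lambda>m. measure M (C \<delta> m)) \<longlonglongrightarrow> 0" if "\<delta> > 0" for \<delta>
    proof -
      have sub: "(\<Inter>m. C \<delta> m) \<subseteq> space M - A"
      proof
        fix \<omega> assume w: "\<omega> \<in> (\<Inter>m. C \<delta> m)"
        hence ws: "\<omega> \<in> space M" unfolding C_def by auto
        show "\<omega> \<in> space M - A"
        proof (rule ccontr)
          assume "\<omega> \<notin> space M - A"
          hence "\<omega> \<in> A" using ws by blast
          then obtain R where R: "\<forall>t. N (lat t) > R \<longrightarrow> \<bar>V t \<omega>\<bar> < \<delta>"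
            unfolding A_def using \<open>\<delta> > 0\<close> by blast
          obtain m :: nat where m: "R < real m" using reals_Archimedean2 by blast
          from w have "\<omega> \<in> C \<delta> m" by blast
          then obtain t where "real m \<le> N (lat t)" "V t \<omega> > \<delta>" unfolding C_def by blast
          moreover have "\<bar>V t \<omega>\<bar> < \<delta>" using R m calculation(1) by force
          ultimately show False by linarith
        qed
      qed
      have "measure M (\<Inter>m. C \<delta> m) \<le> measure M (space M - A)"
        using sub Am by (intro P.finite_measure_mono) auto
      hence "measure M (\<Inter>m. C \<delta> m) = 0" using c0 measure_nonneg[of M "\<Inter>m. C \<delta> m"] by linarith
      thus ?thesis using Clim[of \<delta>] by simp
    qed
    show "\<exists>r :: nat \<Rightarrow> int. mono r \<and> filterlim r at_top sequentially \<and>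
      (\<forall>\<delta>>0. (\<lambda>m::nat. limsup (\<lambda>n. ereal (measure M
          {\<omega> \<in> space M. \<exists>t. real m \<le> N (lat t) \<and> N (lat t) \<le> real_of_int (r n) \<and> V t \<omega> > \<delta>})))
        \<longlonglongrightarrow> 0)"
    proof (rule exI[of _ "\<lambda>n::nat. int n"], intro conjI allI impI)
      show "mono (\<lambda>n::nat. int n)" by (auto simp: mono_def)
      show "filterlim (\<lambda>n::nat. int n) at_top sequentially" by (rule filterlim_int_sequentially)
      fix \<delta> :: real assume dp: "\<delta> > 0"
      let ?f = "\<lambda>m::nat. limsup (\<lambda>n. ereal (measure M
          {\<omega> \<in> space M. \<exists>t. real m \<le> N (lat t) \<and> N (lat t) \<le> real_of_int (int n) \<and> V t \<omega> > \<delta>}))"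
      have up: "?f m \<le> ereal (measure M (C \<delta> m))" for m
      proof -
        have "?f m \<le> limsup (\<lambda>n::nat. ereal (measure M (C \<delta> m)))"
        proof (rule Limsup_mono, rule always_eventually, rule allI)
          fix n :: nat
          have "measure M {\<omega> \<in> space M. \<exists>t. real m \<le> N (lat t) \<and> N (lat t) \<le> real_of_int (int n) \<and> V t \<omega> > \<delta>}
               \<le> measure M (C \<delta> m)"
            by (rule P.finite_measure_mono[OF _ Cm]) (force simp: C_def)
          thus "ereal (measure M {\<omega> \<in> space M. \<exists>t. real m \<le> N (lat t) \<and> N (lat t) \<le> real_of_int (int n) \<and> V t \<omega> > \<delta>})
               \<le> ereal (measure M (C \<delta> m))" by simp
        qed
        also have "\<dots> = ereal (measure M (C \<delta> m))" by (simp add: Limsup_const)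
        finally show ?thesis .
      qed
      have low: "0 \<le> ?f m" for m
      proof -
        have "(0::ereal) = limsup (\<lambda>n::nat. 0)" by (simp add: Limsup_const)
        also have "\<dots> \<le> ?f m" by (rule Limsup_mono) (simp)
        finally show ?thesis .
      qed
      have "(\<lambda>m. ereal (measure M (C \<delta> m))) \<longlonglongrightarrow> ereal 0"
        using Cto0[OF dp] by (rule tendsto_ereal)
      hence "(\<lambda>m. ereal (measure M (C \<delta> m))) \<longlonglongrightarrow> 0" by (simp add: zero_ereal_def)
      show "?f \<longlonglongrightarrow> 0"
        by (rule tendsto_sandwich[OF _ _ tendsto_const \<open>(\<lambda>m. ereal (measure M (C \<delta> m))) \<longlonglongrightarrow> 0\<close>])
           (use low up in auto)
    qed
  next
    assume "\<exists>r :: nat \<Rightarrow> int. mono r \<and> filterlim r at_top sequentially \<and>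
      (\<forall>\<delta>>0. (\<lambda>m::nat. limsup (\<lambda>n. ereal (measure M
          {\<omega> \<in> space M. \<exists>t. real m \<le> N (lat t) \<and> N (lat t) \<le> real_of_int (r n) \<and> V t \<omega> > \<delta>})))
        \<longlonglongrightarrow> 0)"
    then obtain r :: "nat \<Rightarrow> int" where rm: "mono r" and rf: "filterlim r at_top sequentially"
      and rl: "\<And>\<delta>. \<delta> > 0 \<Longrightarrow> (\<lambda>m::nat. limsup (\<lambda>n. ereal (measure M
          {\<omega> \<in> space M. \<exists>t. real m \<le> N (lat t) \<and> N (lat t) \<le> real_of_int (r n) \<and> V t \<omega> > \<delta>})))
        \<longlonglongrightarrow> 0" by blast
    define E where "E = (\<lambda>\<delta> (m::nat) (n::nat). {\<omega> \<in> space M. \<exists>t. real m \<le> N (lat t) \<and> N (lat t) \<le> real_of_int (r n) \<and> V t \<omega> > \<delta>})"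
    have Em: "E \<delta> m n \<in> sets M" for \<delta> m n unfolding E_def
      using meas[of "\<lambda>t. real m \<le> N (lat t) \<and> N (lat t) \<le> real_of_int (r n)" \<delta>] unfolding conj_assoc .
    have Einc: "incseq (E \<delta> m)" for \<delta> m
    proof (rule incseq_SucI)
      fix n
      have "r n \<le> r (Suc n)" using monoD[OF rm, of n "Suc n"] by simp
      hence "real_of_int (r n) \<le> real_of_int (r (Suc n))" by simp
      thus "E \<delta> m n \<subseteq> E \<delta> m (Suc n)" unfolding E_def by force
    qed
    have EU: "(\<Union>n. E \<delta> m n) = C \<delta> m" for \<delta> m
    proof (intro equalityI subsetI)
      fix \<omega> assume "\<omega> \<in> (\<Union>n. E \<delta> m n)" thus "\<omega> \<in> C \<delta> m" unfolding E_def C_def by blast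
    next
      fix \<omega> assume "\<omega> \<in> C \<delta> m"
      then obtain t where t: "\<omega> \<in> space M" "real m \<le> N (lat t)" "V t \<omega> > \<delta>" unfolding C_def by blast
      have "eventually (\<lambda>n. \<lceil>N (lat t)\<rceil> \<le> r n) sequentially"
        using rf by (simp add: filterlim_at_top)
      then obtain n where "\<lceil>N (lat t)\<rceil> \<le> r n" by (auto simp: eventually_sequentially)
      hence "N (lat t) \<le> real_of_int (r n)" by linarith
      with t have "\<omega> \<in> E \<delta> m n" unfolding E_def by blast
      thus "\<omega> \<in> (\<Union>n. E \<delta> m n)" by blast
    qed
    have Cnull: "(\<Inter>m. C \<delta> m) \<in> null_sets M" if dp: "\<delta> > 0" for \<delta>
    proof -
      have lim1: "(\<lambda>n. measure M (E \<delta> m n)) \<longlonglongrightarrow> measure M (C \<delta> m)" for m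
        using P.finite_Lim_measure_incseq[of "E \<delta> m"] Em Einc EU by auto
      have "limsup (\<lambda>n. ereal (measure M (E \<delta> m n))) = ereal (measure M (C \<delta> m))" for m
        by (rule lim_imp_Limsup) (auto intro: tendsto_ereal lim1)
      hence "(\<lambda>m. ereal (measure M (C \<delta> m))) \<longlonglongrightarrow> 0" using rl[OF dp] unfolding E_def by simp
      hence "(\<lambda>m. ereal (measure M (C \<delta> m))) \<longlonglongrightarrow> ereal 0" by (simp add: zero_ereal_def)
      hence "(\<lambda>m. measure M (C \<delta> m)) \<longlonglongrightarrow> 0" by (simp add: lim_ereal)
      hence "measure M (\<Inter>m. C \<delta> m) = 0" using Clim[of \<delta>] LIMSEQ_unique by blast
      moreover have "(\<Inter>m. C \<delta> m) \<in> sets M" using Cm by (intro sets.countable_INT) auto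
      ultimately show ?thesis by (simp add: P.emeasure_eq_measure null_setsI)
    qed
    define D where "D = (\<Union>k::nat. \<Inter>m. C (1/(real k+1)) m)"
    have Dnull: "D \<in> null_sets M" unfolding D_def by (intro null_sets_UN Cnull) simp
    have subD: "space M - A \<subseteq> D"
    proof
      fix \<omega> assume a: "\<omega> \<in> space M - A"
      hence w: "\<omega> \<in> space M" by blast
      from a obtain \<epsilon> where ep: "\<epsilon> > 0" and h: "\<forall>R. \<exists>t. N (lat t) > R \<and> \<bar>V t \<omega>\<bar> \<ge> \<epsilon>"
        unfolding A_def by (auto simp: not_less)
      obtain k where k: "inverse (real (Suc k)) < \<epsilon>" using reals_Archimedean[OF ep] by blast
      hence k': "1/(real k+1) < \<epsilon>" by (simp add: field_simps)
      have "\<omega> \<in> C (1/(real k+1)) m" for m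
      proof -
        obtain t where t: "N (lat t) > real m" "\<bar>V t \<omega>\<bar> \<ge> \<epsilon>" using h by blast
        have "V t \<omega> \<ge> 0" using assms(3) w by blast
        with t k' have "V t \<omega> > 1/(real k+1)" by linarith
        with t w show ?thesis unfolding C_def by force
      qed
      thus "\<omega> \<in> D" unfolding D_def by blast
    qed
    have "measure M (space M - A) \<le> measure M D"
      using subD Dnull by (intro P.finite_measure_mono) auto
    moreover have "measure M D = 0" using Dnull by (simp add: P.emeasure_eq_measure null_sets_def)
    ultimately have "measure M (space M - A) = 0" using measure_nonneg[of M "space M - A"] by linarith
    thus "measure M A = 1" using compl by simp
  qed
qed

end
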